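(* For every $n\ge1$, let $\alpha_n$ be the minimal real zero of $\phi_n(x)$. Then $\mathrm{QEC}(K_1+P_n)=-2\alpha_n-2$.
   Context: For a finite connected graph $G=(V,E)$ with $|V|\ge2$, let $d(i,j)$ be the graph distance and $D=[d(i,j)]_{i,j\in V}$ the distance matrix. The quadratic embedding constant is $\mathrm{QEC}(G)=\max\{\langle f,Df\rangle : f\in\mathbb{R}^V,\ \langle f,f\rangle=1,\ \langle\mathbf 1,f\rangle=0\}$, where $\mathbf 1$ is the all-ones vector. The fan graph $K_1+P_n$ has vertex set $\{0,1,\dots,n\}$ and edges $\{i,i+1\}$ ($1\le i\le n-1$) and $\{0,i\}$ ($1\le i\le n$). $U_n(x)$ is the Chebyshev polynomial of the second kind ($U_n(\cos\theta)=\sin((n+1)\theta)/\sin\theta$, $U_{-1}=0$), and $\phi_n(x)=((n+1)x^2-3x-n)U_n(x)+(x+1)(U_{n-1}(x)+1)$, a polynomial of degree $n+2$ all of whose zeros are real. *)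

theory Defs
  imports "HOL-Analysis.Analysis"
begin

definition graph_dist :: "('a \<Rightarrow> 'a \<Rightarrow> bool) \<Rightarrow> 'a \<Rightarrow> 'a \<Rightarrow> nat" where
  "graph_dist E u v = (LEAST k. (E ^^ k) u v)"

definition QEC :: "'a set \<Rightarrow> ('a \<Rightarrow> 'a \<Rightarrow> bool) \<Rightarrow> real" where
  "QEC V E = Sup {(\<Sum>i\<in>V. \<Sum>j\<in>V. f i * real (graph_dist E i j) * f j) | f :: 'a \<Rightarrow> real.
                   (\<Sum>i\<in>V. f i ^ 2) = 1 \<and> (\<Sum>i\<in>V. f i) = 0}"

(* Fan graph K_1 + P_n: vertices {0..n}, edges {i,i+1} (1 \<le> i \<le> n-1) and {0,i} (1 \<le> i \<le> n) *)
definition fan_vertices :: "nat \<Rightarrow> nat set" where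
  "fan_vertices n = {0..n}"

definition fan_edge :: "nat \<Rightarrow> nat \<Rightarrow> nat \<Rightarrow> bool" where
  "fan_edge n i j \<longleftrightarrow> i \<le> n \<and> j \<le> n \<and>
     ((i = 0 \<and> 1 \<le> j) \<or> (j = 0 \<and> 1 \<le> i) \<or>
      (1 \<le> i \<and> 1 \<le> j \<and> (j = i + 1 \<or> i = j + 1)))"

fun chebU :: "nat \<Rightarrow> real \<Rightarrow> real" where
  "chebU 0 x = 1"
| "chebU (Suc 0) x = 2 * x"
| "chebU (Suc (Suc n)) x = 2 * x * chebU (Suc n) x - chebU n x"

definition phi :: "nat \<Rightarrow> real \<Rightarrow> real" where
  "phi n x = ((real n + 1) * x ^ 2 - 3 * x - real n) * chebU n x
             + (x + 1) * (chebU (n - 1) x + 1)"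

end

theory Submission
  imports Defs "HOL-Computational_Algebra.Polynomial"
begin


lemma cheb_cassini:
  "chebU (Suc k) x ^ 2 + chebU k x ^ 2 - 2 * x * chebU (Suc k) x * chebU k x = 1"
proof (induction k)
  case 0 then show ?case by (simp add: power2_eq_square)
next
  case (Suc k)
  then show ?case by (simp add: power2_eq_square algebra_simps)
qed

fun Vc :: "nat \<Rightarrow> real \<Rightarrow> real" where
  "Vc 0 x = 0"
| "Vc (Suc j) x = chebU j x"

fun Wc :: "nat \<Rightarrow> real \<Rightarrow> real" where
  "Wc 0 x = -1"
| "Wc (Suc 0) x = 0"
| "Wc (Suc (Suc j)) x = chebU j x"

lemma Vc_rec: "Vc (j+2) x = 2*x*Vc (j+1) x - Vc j x"
  by (cases j) auto

lemma Wc_rec: "Wc (j+2) x = 2*x*Wc (j+1) x - Wc j x"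
proof (cases j)
  case (Suc i) then show ?thesis by (cases i) auto
qed simp

lemma lin_rec:
  fixes y :: "nat \<Rightarrow> real"
  assumes "\<And>j. j < m \<Longrightarrow> y (j+2) = 2*x*y (j+1) - y j"
  shows "j \<le> m+1 \<Longrightarrow> y j = y 1 * Vc j x - y 0 * Wc j x"
proof (induction j rule: less_induct)
  case (less j)
  show ?case
  proof (cases j)
    case 0 then show ?thesis by simp
  next
    case (Suc i)
    show ?thesis
    proof (cases i)
      case 0 then show ?thesis using Suc by simp
    next
      case (Suc l)
      then have j: "j = l + 2" using \<open>j = Suc i\<close> by simp
      have "y j = 2*x*y (l+1) - y l" using assms[of l] j less.prems by simp
      also have "\<dots> = 2*x*(y 1 * Vc (l+1) x - y 0 * Wc (l+1) x) - (y 1 * Vc l x - y 0 * Wc l x)"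
        using less.IH[of l] less.IH[of "l+1"] j less.prems by simp
      also have "\<dots> = y 1 * (2*x*Vc (l+1) x - Vc l x) - y 0 * (2*x*Wc (l+1) x - Wc l x)"
        by (simp add: algebra_simps del: Vc.simps Wc.simps)
      also have "\<dots> = y 1 * Vc j x - y 0 * Wc j x"
        by (simp only: j Vc_rec Wc_rec)
      finally show ?thesis .
    qed
  qed
qed



lemma core_det:
  fixes x u w N :: real
  shows "u*((1+x)*(1 - w + 2*x*w - u + 2*N*(1-x)) - 2*(1-x)^2) - (1 + w - u)*((1+x)*(1+w))
     = -2*((N*x^2 + x^2 - 3*x - N)*u + (x+1)*(w+1)) + (1+x)*(1 + 2*x*u * w - u^2 - w^2)"
  by (simp add: algebra_simps power2_eq_square)

lemma core_E2:
  fixes x w u a d N gn :: real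
  assumes "gn = d + (a-d)*w + d*(2*x*w - u)"
  shows "(1+x)*(a + gn + 2*N*(1-x)*d) - 2*(1-x)^2*d =
    a*((1+x)*(1+w)) + d*((1+x)*(1 - w + 2*x*w - u + 2*N*(1-x)) - 2*(1-x)^2)"
  unfolding assms by (simp add: algebra_simps power2_eq_square)

lemma lin2:
  fixes P Q R S a d :: real
  assumes "a*P + d*Q = 0" "a*R + d*S = 0" "P*S - Q*R \<noteq> 0"
  shows "a = 0 \<and> d = 0"
proof -
  have "(P*S - Q*R) * a = S*(a*P + d*Q) - Q*(a*R + d*S)" by (simp add: algebra_simps)
  then have "(P*S - Q*R) * a = 0" using assms by simp
  moreover have "(P*S - Q*R) * d = P*(a*R + d*S) - R*(a*P + d*Q)" by (simp add: algebra_simps)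
  then have "(P*S - Q*R) * d = 0" using assms by simp
  ultimately show ?thesis using assms(3) by simp
qed

lemma lin2':
  fixes P Q R S :: real
  assumes "P*S - Q*R = 0"
  obtains a d where "a \<noteq> 0 \<or> d \<noteq> 0" "a*P + d*Q = 0" "a*R + d*S = 0"
proof (cases "P \<noteq> 0 \<or> Q \<noteq> 0")
  case True
  have "Q*R + (-P)*S = -(P*S - Q*R)" by (simp add: algebra_simps)
  then have "Q*R + (-P)*S = 0" using assms by simp
  moreover have "Q*P + (-P)*Q = 0" by simp
  ultimately show ?thesis using that[of Q "-P"] True by auto
next
  case False
  show ?thesis
  proof (cases "R \<noteq> 0 \<or> S \<noteq> 0")
    case True
    have "S*R + (-R)*S = 0" by simp
    then show ?thesis using that[of S "-R"] True False by auto
  next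
    case F2: False
    show ?thesis using that[of 1 0] False F2 by auto
  qed
qed


lemma core_alg:
  fixes x u w a d gn N :: real
  assumes hid: "u^2 + w^2 - 2*x*u * w = 1"
    and E1: "a*u + d*(1 + w - u) = 0"
    and E2: "(1+x)*(a + gn + 2*N*(1-x)*d) = 2*(1-x)^2*d"
    and gn: "gn = d + (a-d)*w + d*(2*x*w - u)"
    and ph: "(N*x^2 + x^2 - 3*x - N)*u + (x+1)*(w+1) \<noteq> 0"
  shows "a = 0 \<and> d = 0"
proof (rule lin2)
  show "a*u + d*(1 + w - u) = 0" by fact
  show "a*((1+x)*(1+w)) + d*((1+x)*(1 - w + 2*x*w - u + 2*N*(1-x)) - 2*(1-x)^2) = 0"
    using core_E2[OF gn, of N] unfolding E2 by simp
  have h0: "1 + 2*x*u * w - u^2 - w^2 = 0" using hid by algebra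
  show "u*((1+x)*(1 - w + 2*x*w - u + 2*N*(1-x)) - 2*(1-x)^2) - (1 + w - u)*((1+x)*(1+w)) \<noteq> 0"
  proof -
    have "u*((1+x)*(1 - w + 2*x*w - u + 2*N*(1-x)) - 2*(1-x)^2) - (1 + w - u)*((1+x)*(1+w))
      = -2*((N*x^2 + x^2 - 3*x - N)*u + (x+1)*(w+1))"
      using core_det[of u x w N, unfolded h0] by (simp only: mult_zero_right add_0_right)
    then show ?thesis using ph by (metis mult_eq_0_iff neg_equal_0_iff_equal zero_neq_numeral)
  qed
qed

lemma core_alg2:
  fixes x u w N :: real
  assumes hid: "u^2 + w^2 - 2*x*u * w = 1"
    and ph: "(N*x^2 + x^2 - 3*x - N)*u + (x+1)*(w+1) = 0"
  obtains a d where "a \<noteq> 0 \<or> d \<noteq> 0" "a*u + d*(1 + w - u) = 0"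
     "(1+x)*(a + (d + (a-d)*w + d*(2*x*w - u)) + 2*N*(1-x)*d) = 2*(1-x)^2*d"
proof -
  have h0: "1 + 2*x*u * w - u^2 - w^2 = 0" using hid by algebra
  have "u*((1+x)*(1 - w + 2*x*w - u + 2*N*(1-x)) - 2*(1-x)^2) - (1 + w - u)*((1+x)*(1+w)) = 0"
    using core_det[of u x w N, unfolded h0 ph] by (simp only: mult_zero_right add_0_right)
  then obtain a d where ad: "a \<noteq> 0 \<or> d \<noteq> 0" "a*u + d*(1 + w - u) = 0"
     "a*((1+x)*(1+w)) + d*((1+x)*(1 - w + 2*x*w - u + 2*N*(1-x)) - 2*(1-x)^2) = 0"
    by (rule lin2')
  show ?thesis
  proof (rule that[of a d])
    show "a \<noteq> 0 \<or> d \<noteq> 0" by fact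
    show "a*u + d*(1 + w - u) = 0" by fact
    show "(1+x)*(a + (d + (a-d)*w + d*(2*x*w - u)) + 2*N*(1-x)*d) = 2*(1-x)^2*d"
      using core_E2[of "d + (a-d)*w + d*(2*x*w - u)" d a w x u N, unfolded ad(3)] by simp
  qed
qed




lemma sum_prev: "g 0 = (0::real) \<Longrightarrow> (\<Sum>k\<in>{1..(n::nat)}. g (k-1)) = (\<Sum>k\<in>{1..n}. g k) - g n"
  by (induction n) (auto simp: sum.atLeast_Suc_atMost_Suc_shift)

lemma sum_next: "(\<Sum>k\<in>{1..(n::nat)}. g (k+1)) = (\<Sum>k\<in>{1..n}. g k) - g 1 + (g (n+1)::real)"
  by (induction n) auto

lemma prod_prev: "g 0 = (0::real) \<Longrightarrow> (\<Sum>k\<in>{1..n}. g k * g (k-1)) = (\<Sum>k\<in>{1..<n}. g k * g (Suc k))"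
proof (induction n)
  case 0 then show ?case by simp
next
  case (Suc n)
  then show ?case by (cases n) (auto simp: mult.commute)
qed

lemma prod_next: "g 0 = (0::real) \<Longrightarrow> (\<Sum>k\<in>{1..n}. g k * g (k+1)) = (\<Sum>k\<in>{1..<n}. g k * g (Suc k)) + g n * g (n+1)"
proof (induction n)
  case 0 then show ?case by simp
next
  case (Suc n)
  then show ?case by (cases n) auto
qed

lemma sum_shift2:
  fixes g :: "nat \<Rightarrow> real"
  assumes "g 0 = 0" "g (n+1) = 0"
  shows "(\<Sum>k\<in>{1..n}. g (k-1) + g (k+1) - 2*x*g k) = 2*(1-x)*(\<Sum>k\<in>{1..n}. g k) - g 1 - g n"
proof -
  have "(\<Sum>k\<in>{1..n}. g (k-1) + g (k+1) - 2*x*g k) =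
     (\<Sum>k\<in>{1..n}. g (k-1)) + (\<Sum>k\<in>{1..n}. g (k+1)) - 2*x*(\<Sum>k\<in>{1..n}. g k)"
    by (simp add: sum.distrib sum_subtractf sum_distrib_left)
  also have "\<dots> = 2*(1-x)*(\<Sum>k\<in>{1..n}. g k) - g 1 - g n"
    using sum_prev[of g n, OF assms(1)] sum_next[of g n] assms(2) by (simp add: algebra_simps)
  finally show ?thesis .
qed

lemma Wc_Suc: "Wc (Suc m) x = 2*x*chebU m x - chebU (Suc m) x"
  by (cases m) auto

lemma phi_alt: "phi n x = (real n*x^2 + x^2 - 3*x - real n)*chebU n x + (x+1)*(chebU (n-1) x+1)"
  unfolding phi_def by (simp add: algebra_simps)

lemma cassini_n: "n \<ge> 1 \<Longrightarrow> chebU n x ^ 2 + chebU (n-1) x ^ 2 - 2*x*chebU n x * chebU (n-1) x = 1"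
  using cheb_cassini[of "n-1" x] by simp



lemma eig_root:
  fixes g :: "nat \<Rightarrow> real"
  assumes n: "n \<ge> 1" and x1: "x \<noteq> 1" and g0: "g 0 = 0" and gn1: "g (n+1) = 0"
    and eq: "\<And>k. k \<in> {1..n} \<Longrightarrow> g (k-1) + g (k+1) - 2*x*g k = 2*(1+x)*(\<Sum>i\<in>{1..n}. g i)"
    and nz: "\<exists>k\<in>{1..n}. g k \<noteq> 0"
  shows "phi n x = 0"
proof (rule ccontr)
  assume ph: "phi n x \<noteq> 0"
  define ss where "ss = (\<Sum>i\<in>{1..n}. g i)"
  define c where "c = 2*(1+x)* ss"
  define d where "d = c / (2*(1-x))"
  have cd: "c = 2*(1-x)*d" using x1 by (simp add: d_def)
  define y where "y j = g j - d" for j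
  have yrec: "y (j+2) = 2*x*y (j+1) - y j" if "j < n" for j
  proof -
    have "g j + g (j+2) - 2*x*g (j+1) = c" using eq[of "j+1"] that by (simp add: c_def ss_def)
    then show ?thesis unfolding y_def cd by (simp add: algebra_simps)
  qed
  have ysol: "y j = y 1 * Vc j x - y 0 * Wc j x" if "j \<le> n+1" for j
    using lin_rec[of n y x, OF yrec] that by blast
  define a where "a = g 1"
  define u where "u = chebU n x"
  define w where "w = chebU (n-1) x"
  have V1: "Vc (n+1) x = u" by (simp add: u_def)
  have W1: "Wc (n+1) x = w" using n by (cases n) (auto simp: w_def)
  have V0: "Vc n x = w" using n by (cases n) (auto simp: w_def)
  have W0: "Wc n x = 2*x*w - u" using n Wc_Suc[of "n-1" x] by (cases n) (auto simp: w_def u_def)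
  have y0: "y 0 = -d" by (simp add: y_def g0)
  have y1: "y 1 = a - d" by (simp add: y_def a_def)
  have E1: "a*u + d*(1 + w - u) = 0"
  proof -
    have "y (n+1) = -d" using gn1 by (simp add: y_def)
    then have "-d = (a-d)*u + d*w" using ysol[of "n+1"] V1 W1 y0 y1 by simp
    then show ?thesis by (simp add: algebra_simps)
  qed
  define gn where "gn = g n"
  have gn: "gn = d + (a-d)*w + d*(2*x*w - u)"
  proof -
    have "gn = d + y n" by (simp add: y_def gn_def)
    also have "\<dots> = d + ((a-d)*w - (-d)*(2*x*w - u))" using ysol[of n] V0 W0 y0 y1 by simp
    finally show ?thesis by simp
  qed
  have sumeq: "2*(1-x)* ss - a - gn = real n * c"
  proof -
    have "(\<Sum>k\<in>{1..n}. g (k-1) + g (k+1) - 2*x*g k) = (\<Sum>k\<in>{1..n}. c)"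
      using eq by (simp add: c_def ss_def)
    then show ?thesis using sum_shift2[of g n x, OF g0 gn1] by (simp add: ss_def a_def gn_def)
  qed
  have E2: "(1+x)*(a + gn + 2*real n*(1-x)*d) = 2*(1-x)^2*d"
  proof -
    have A: "a + gn + 2*real n*(1-x)*d = 2*(1-x)* ss" using sumeq cd by (simp add: algebra_simps)
    have "(1+x)*(a + gn + 2*real n*(1-x)*d) = (1+x)*(2*(1-x)* ss)" by (simp only: A)
    also have "\<dots> = (1-x)*c" by (simp add: c_def algebra_simps)
    also have "\<dots> = 2*(1-x)^2*d" by (simp add: cd power2_eq_square algebra_simps)
    finally show ?thesis .
  qed
  have ph': "(real n*x^2 + x^2 - 3*x - real n)*u + (x+1)*(w+1) \<noteq> 0"
    using ph by (simp add: phi_alt u_def w_def)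
  have hid: "u^2 + w^2 - 2*x*u * w = 1" using cassini_n[OF n, of x] by (simp add: u_def w_def)
  have "a = 0 \<and> d = 0" by (rule core_alg[OF hid E1 E2 gn ph'])
  then have "y j = - 0" if "j \<le> n+1" for j using ysol[OF that] y0 y1 by simp
  then have "g j = 0" if "j \<le> n+1" for j using that \<open>a = 0 \<and> d = 0\<close> by (simp add: y_def)
  then show False using nz by auto
qed



lemma root_eig:
  assumes n: "n \<ge> 1" and x1: "x \<noteq> 1" and ph: "phi n x = 0"
  obtains g :: "nat \<Rightarrow> real" where "g 0 = 0" "g (n+1) = 0"
    "\<And>k. k \<in> {1..n} \<Longrightarrow> g (k-1) + g (k+1) - 2*x*g k = 2*(1+x)*(\<Sum>i\<in>{1..n}. g i)"
    "\<exists>k\<in>{1..n}. g k \<noteq> 0"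
proof -
  define u where "u = chebU n x"
  define w where "w = chebU (n-1) x"
  have hid: "u^2 + w^2 - 2*x*u * w = 1" using cassini_n[OF n, of x] by (simp add: u_def w_def)
  have ph': "(real n*x^2 + x^2 - 3*x - real n)*u + (x+1)*(w+1) = 0"
    using ph by (simp only: phi_alt u_def w_def)
  obtain a d where ad: "a \<noteq> 0 \<or> d \<noteq> 0" "a*u + d*(1 + w - u) = 0"
     "(1+x)*(a + (d + (a-d)*w + d*(2*x*w - u)) + 2*real n*(1-x)*d) = 2*(1-x)^2*d"
    by (rule core_alg2[OF hid ph'])
  define g where "g j = d + (a-d)*Vc j x + d*Wc j x" for j
  have V1: "Vc (n+1) x = u" by (simp add: u_def)
  have W1: "Wc (n+1) x = w" using n by (cases n) (auto simp: w_def)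
  have V0: "Vc n x = w" using n by (cases n) (auto simp: w_def)
  have W0: "Wc n x = 2*x*w - u" using n Wc_Suc[of "n-1" x] by (cases n) (auto simp: w_def u_def)
  have g0: "g 0 = 0" by (simp add: g_def)
  have g1: "g 1 = a" by (simp add: g_def)
  have g1': "g (Suc 0) = a" by (simp add: g_def)
  have gn1: "g (n+1) = 0"
  proof -
    have "g (n+1) = a*u + d*(1 + w - u)" unfolding g_def V1 W1 by (simp add: algebra_simps)
    then show ?thesis using ad(2) by simp
  qed
  have gn: "g n = d + (a-d)*w + d*(2*x*w - u)" unfolding g_def V0 W0 by simp
  have rec: "g (k-1) + g (k+1) - 2*x*g k = 2*(1-x)*d" if "k \<ge> 1" for k
  proof -
    define j where "j = k - 1"
    have j: "k = j + 1" using that by (simp add: j_def)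
    have "g (k-1) + g (k+1) - 2*x*g k = g j + g (j+2) - 2*x*g (j+1)" by (simp add: j)
    also have "\<dots> = 2*(1-x)*d"
      unfolding g_def Vc_rec[of j x] Wc_rec[of j x] by (simp add: algebra_simps)
    finally show ?thesis .
  qed
  define ss where "ss = (\<Sum>i\<in>{1..n}. g i)"
  have sumeq: "2*(1-x)* ss - a - g n = real n * (2*(1-x)*d)"
  proof -
    have "(\<Sum>k\<in>{1..n}. g (k-1) + g (k+1) - 2*x*g k) = (\<Sum>k\<in>{1..n}. 2*(1-x)*d)"
      using rec by (intro sum.cong) auto
    then show ?thesis using sum_shift2[of g n x, OF g0 gn1] by (simp add: ss_def g1')
  qed
  have key: "2*(1+x)* ss = 2*(1-x)*d"
  proof -
    have A: "a + g n + 2*real n*(1-x)*d = 2*(1-x)* ss" using sumeq by (simp add: algebra_simps)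
    have "(1-x)*(2*(1+x)* ss) = (1+x)*(2*(1-x)* ss)" by (simp add: algebra_simps)
    also have "\<dots> = (1+x)*(a + g n + 2*real n*(1-x)*d)" by (simp only: A)
    also have "\<dots> = 2*(1-x)^2*d" unfolding gn by (rule ad(3))
    also have "\<dots> = (1-x)*(2*(1-x)*d)" by (simp add: power2_eq_square)
    finally show ?thesis using x1 by simp
  qed
  show ?thesis
  proof (rule that)
    show "g 0 = 0" by fact
    show "g (n+1) = 0" by fact
    show "g (k-1) + g (k+1) - 2*x*g k = 2*(1+x)*(\<Sum>i\<in>{1..n}. g i)" if "k \<in> {1..n}" for k
      using rec[of k] that key by (simp add: ss_def)
    show "\<exists>k\<in>{1..n}. g k \<noteq> 0"
    proof (rule ccontr)
      assume "\<not> ?thesis"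
      then have z: "g k = 0" if "k \<in> {1..n}" for k using that by auto
      have "a = 0" using z[of 1] n g1 by simp
      have g2: "g 2 = 0" using z[of 2] gn1 n by (cases "n = 1") (auto simp: numeral_2_eq_2)
      have "2*(1-x)*d = 0" using rec[of 1] g0 g2 z[of 1] n by (simp add: numeral_2_eq_2)
      then have "d = 0" using x1 by simp
      then show False using ad(1) \<open>a = 0\<close> by simp
    qed
  qed
qed

lemma rayleigh:
  fixes g :: "nat \<Rightarrow> real"
  assumes g0: "g 0 = 0" and gn1: "g (n+1) = 0"
    and eq: "\<And>k. k \<in> {1..n} \<Longrightarrow> g (k-1) + g (k+1) - 2*x*g k = 2*(1+x)*(\<Sum>i\<in>{1..n}. g i)"
  shows "(\<Sum>k\<in>{1..<n}. g k * g (Suc k)) - (\<Sum>i\<in>{1..n}. g i)^2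
     = x * ((\<Sum>i\<in>{1..n}. g i)^2 + (\<Sum>i\<in>{1..n}. g i ^ 2))"
proof -
  define ss where "ss = (\<Sum>i\<in>{1..n}. g i)"
  define P where "P = (\<Sum>k\<in>{1..<n}. g k * g (Suc k))"
  define G where "G = (\<Sum>i\<in>{1..n}. g i ^ 2)"
  have "(\<Sum>k\<in>{1..n}. g k * (g (k-1) + g (k+1) - 2*x*g k)) = (\<Sum>k\<in>{1..n}. g k * (2*(1+x)* ss))"
    using eq by (intro sum.cong) (auto simp: ss_def)
  moreover have "(\<Sum>k\<in>{1..n}. g k * (g (k-1) + g (k+1) - 2*x*g k)) =
      (\<Sum>k\<in>{1..n}. g k * g (k-1)) + (\<Sum>k\<in>{1..n}. g k * g (k+1)) - 2*x*G"
    by (simp add: G_def algebra_simps sum.distrib sum_subtractf sum_distrib_left power2_eq_square)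
  moreover have "(\<Sum>k\<in>{1..n}. g k * (2*(1+x)* ss)) = 2*(1+x)* ss * ss"
    by (simp add: ss_def sum_distrib_right mult.commute)
  ultimately have "P + P - 2*x*G = 2*(1+x)* ss * ss"
    using prod_prev[of g n, OF g0] prod_next[of g n, OF g0] gn1 by (simp add: P_def)
  then have "P - ss^2 = x*(ss^2 + G)" by (simp add: algebra_simps power2_eq_square)
  then show ?thesis by (simp add: ss_def P_def G_def)
qed



definition Rq :: "nat \<Rightarrow> (nat \<Rightarrow> real) \<Rightarrow> real" where
  "Rq n f = (\<Sum>k\<in>{1..<n}. f k * f (Suc k)) - f 0 ^ 2"

definition Bl :: "nat \<Rightarrow> (nat \<Rightarrow> real) \<Rightarrow> (nat \<Rightarrow> real) \<Rightarrow> real" where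
  "Bl n f h = (\<Sum>k\<in>{1..<n}. f k * h (Suc k) + h k * f (Suc k)) - 2 * f 0 * h 0"

lemma Rq_add: "Rq n (\<lambda>i. f i + t * h i) = Rq n f + t * Bl n f h + t^2 * Rq n h"
proof -
  have "(\<Sum>k\<in>{1..<n}. (f k + t * h k) * (f (Suc k) + t * h (Suc k))) =
     (\<Sum>k\<in>{1..<n}. f k * f (Suc k) + t * (f k * h (Suc k) + h k * f (Suc k)) + t^2 * (h k * h (Suc k)))"
    by (intro sum.cong) (auto simp: algebra_simps power2_eq_square)
  also have "\<dots> = (\<Sum>k\<in>{1..<n}. f k * f (Suc k)) + t * (\<Sum>k\<in>{1..<n}. f k * h (Suc k) + h k * f (Suc k))
      + t^2 * (\<Sum>k\<in>{1..<n}. h k * h (Suc k))"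
    by (simp add: sum.distrib sum_distrib_left distrib_left)
  finally show ?thesis unfolding Rq_def Bl_def by (simp add: algebra_simps power2_eq_square)
qed

lemma sq_add: "(\<Sum>i\<in>A. (f i + t * h i)^2) = (\<Sum>i\<in>A. f i^2) + 2 * t * (\<Sum>i\<in>A. f i * h i) + t^2 * (\<Sum>i\<in>A. (h i::real)^2)"
proof -
  have "(\<Sum>i\<in>A. (f i + t * h i)^2) = (\<Sum>i\<in>A. f i^2 + 2 * t * (f i * h i) + t^2 * h i^2)"
    by (intro sum.cong) (auto simp: algebra_simps power2_eq_square)
  also have "\<dots> = (\<Sum>i\<in>A. f i^2) + 2 * t * (\<Sum>i\<in>A. f i * h i) + t^2 * (\<Sum>i\<in>A. (h i::real)^2)"
    by (simp add: sum.distrib sum_distrib_left)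
  finally show ?thesis .
qed

lemma Rq_scale: "Rq n (\<lambda>i. c * f i) = c^2 * Rq n f"
proof -
  have "(\<Sum>k\<in>{1..<n}. (c * f k) * (c * f (Suc k))) = c^2 * (\<Sum>k\<in>{1..<n}. f k * f (Suc k))"
    by (simp add: sum_distrib_left power2_eq_square algebra_simps)
  then show ?thesis unfolding Rq_def by (simp add: algebra_simps power2_eq_square)
qed

lemma quad_zero:
  fixes B Cq :: real
  assumes "\<And>t. 0 \<le> t * B + t^2 * Cq"
  shows "B = 0"
proof (rule ccontr)
  assume B: "B \<noteq> 0"
  define e where "e = \<bar>Cq\<bar> + 1"
  have e: "e > 0" by (simp add: e_def)
  define t where "t = - B / e"
  have "t * B + t^2 * Cq = (B^2 / e^2) * (Cq - e)"
    using e by (simp add: t_def field_simps power2_eq_square)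
  moreover have "(B^2 / e^2) * (Cq - e) < 0"
  proof (rule mult_pos_neg)
    show "B^2 / e^2 > 0" using B e by simp
    show "Cq - e < 0" by (simp add: e_def)
  qed
  ultimately have "t * B + t^2 * Cq < 0" by simp
  then show False using assms[of t] by simp
qed

definition Kset :: "nat \<Rightarrow> (nat \<Rightarrow> real) set" where
  "Kset n = {f. (\<forall>k. f k \<in> (if k \<le> n then {-1..1} else {0})) \<and>
      (\<Sum>i\<in>{0..n}. f i ^ 2) = 1 \<and> (\<Sum>i\<in>{0..n}. f i) = 0}"

lemma coord_cont: "continuous_on UNIV (\<lambda>f::nat \<Rightarrow> real. f i)"
  by simp

lemma compact_K: "compact (Kset n)"
proof -
  define B where "B k = (if k \<le> n then {-1..1} else {0::real})" for k
  have "compactin (product_topology (\<lambda>_. euclidean) UNIV) (PiE UNIV B)"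
    unfolding compactin_PiE by (auto simp: B_def)
  then have c1: "compact (Pi UNIV B)"
    by (simp add: euclidean_product_topology PiE_UNIV_domain)
  have c2: "closed {f::nat\<Rightarrow>real. (\<Sum>i\<in>{0..n}. f i ^ 2) = 1}"
    by (intro closed_Collect_eq continuous_intros coord_cont)
  have c3: "closed {f::nat\<Rightarrow>real. (\<Sum>i\<in>{0..n}. f i) = 0}"
    by (intro closed_Collect_eq continuous_intros coord_cont)
  have "Kset n = (Pi UNIV B \<inter> {f. (\<Sum>i\<in>{0..n}. f i ^ 2) = 1}) \<inter> {f. (\<Sum>i\<in>{0..n}. f i) = 0}"
    by (auto simp: Kset_def B_def Pi_def)
  then show ?thesis using c1 c2 c3 by (simp add: compact_Int_closed)
qed

definition tv :: "nat \<Rightarrow> real" where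
  "tv k = (if k = 0 then - (1 / sqrt 2) else if k = 1 then 1 / sqrt 2 else 0)"

lemma tv_K: assumes "n \<ge> 1" shows "tv \<in> Kset n"
proof -
  have s2: "sqrt 2 \<ge> (1::real)" by simp
  have "(\<Sum>i\<in>{0..n}. tv i ^ 2) = tv 0 ^ 2 + (\<Sum>i\<in>{1..n}. tv i ^ 2)"
    by (simp add: sum.atLeast_Suc_atMost)
  also have "(\<Sum>i\<in>{1..n}. tv i ^ 2) = tv 1 ^ 2"
    using assms by (subst sum.mono_neutral_right[of "{1..n}" "{1}"]) (auto simp: tv_def)
  finally have A: "(\<Sum>i\<in>{0..n}. tv i ^ 2) = 1" by (simp add: tv_def power_divide)
  have "(\<Sum>i\<in>{0..n}. tv i) = tv 0 + (\<Sum>i\<in>{1..n}. tv i)"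
    by (simp add: sum.atLeast_Suc_atMost)
  also have "(\<Sum>i\<in>{1..n}. tv i) = tv 1"
    using assms by (subst sum.mono_neutral_right[of "{1..n}" "{1}"]) (auto simp: tv_def)
  finally have B: "(\<Sum>i\<in>{0..n}. tv i) = 0" by (simp add: tv_def)
  have "\<bar>1 / sqrt 2\<bar> \<le> (1::real)" using s2 by simp
  have "0 \<le> 1 / sqrt (2::real)" by simp
  have m1: "-1 \<le> 1 / sqrt (2::real)" by (rule order_trans[of _ 0]) simp_all
  then have C: "tv k \<in> (if k \<le> n then {-1..1} else {0})" for k
    using assms \<open>\<bar>1 / sqrt 2\<bar> \<le> (1::real)\<close> \<open>0 \<le> 1 / sqrt (2::real)\<close> m1
    by (auto simp: tv_def)
  show ?thesis using A B C by (simp add: Kset_def)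
qed

lemma Rq_tv: "Rq n tv = - 1/2"
proof -
  have "(\<Sum>k\<in>{1..<n}. tv k * tv (Suc k)) = 0" by (intro sum.neutral) (auto simp: tv_def)
  then show ?thesis by (simp add: Rq_def tv_def power_divide)
qed



definition gof :: "nat \<Rightarrow> (nat \<Rightarrow> real) \<Rightarrow> nat \<Rightarrow> real" where
  "gof n f j = (if 1 \<le> j \<and> j \<le> n then f j else 0)"

definition hk :: "nat \<Rightarrow> nat \<Rightarrow> real" where
  "hk k i = (if i = k then 1 else if i = 0 then -1 else 0)"

lemma sum_0n: "(\<Sum>i\<in>{0..(n::nat)}. X i) = X 0 + (\<Sum>i\<in>{1..n}. (X i :: real))"
  by (simp add: sum.atLeast_Suc_atMost)

lemma sum_hk: assumes "k \<in> {1..n}" shows "(\<Sum>i\<in>{0..n}. hk k i * X i) = X k - X 0"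
proof -
  have "(\<Sum>i\<in>{1..n}. hk k i * X i) = (\<Sum>i\<in>{1..n}. if i = k then X i else 0)"
    by (intro sum.cong) (auto simp: hk_def)
  also have "\<dots> = X k" using assms by (simp add: sum.delta')
  finally show ?thesis using assms by (simp add: sum_0n hk_def)
qed

lemma Bl_hk:
  assumes k: "k \<in> {1..n}"
  shows "Bl n f (hk k) = gof n f (k-1) + gof n f (k+1) + 2 * f 0"
proof -
  have A: "(\<Sum>i\<in>{1..<n}. f i * hk k (Suc i)) = gof n f (k-1)"
  proof -
    have "(\<Sum>i\<in>{1..<n}. f i * hk k (Suc i)) = (\<Sum>i\<in>{1..<n}. if i = k - 1 then f i else 0)"
      using k by (intro sum.cong) (auto simp: hk_def)
    also have "\<dots> = gof n f (k-1)" using k by (auto simp: sum.delta' gof_def)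
    finally show ?thesis .
  qed
  have B: "(\<Sum>i\<in>{1..<n}. hk k i * f (Suc i)) = gof n f (k+1)"
  proof -
    have "(\<Sum>i\<in>{1..<n}. hk k i * f (Suc i)) = (\<Sum>i\<in>{1..<n}. if i = k then f (Suc i) else 0)"
      using k by (intro sum.cong) (auto simp: hk_def)
    also have "\<dots> = gof n f (k+1)" using k by (auto simp: sum.delta' gof_def)
    finally show ?thesis .
  qed
  show ?thesis unfolding Bl_def sum.distrib A B using k by (simp add: hk_def)
qed

lemma Kset_out: "f \<in> Kset n \<Longrightarrow> k > n \<Longrightarrow> f k = 0"
  unfolding Kset_def by (metis (mono_tags, lifting) mem_Collect_eq not_le singletonD)

lemma homog:
  assumes minf: "\<And>f. f \<in> Kset n \<Longrightarrow> Rq n fm \<le> Rq n f"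
    and sup: "\<And>k. k > n \<Longrightarrow> f k = 0" and s0: "(\<Sum>i\<in>{0..n}. f i) = 0"
  shows "Rq n fm * (\<Sum>i\<in>{0..n}. f i ^ 2) \<le> Rq n f"
proof (cases "(\<Sum>i\<in>{0..n}. f i ^ 2) = 0")
  case True
  then have z: "f i = 0" if "i \<le> n" for i
    using that by (subst (asm) sum_nonneg_eq_0_iff) auto
  have "Rq n f = 0" unfolding Rq_def using z by (simp add: z[of 0])
  then show ?thesis using True by simp
next
  case False
  define q where "q = (\<Sum>i\<in>{0..n}. f i ^ 2)"
  have "q \<ge> 0" by (simp add: q_def sum_nonneg)
  then have q: "q > 0" using False by (simp add: q_def)
  define c where "c = 1 / sqrt q"
  have c2: "c^2 = 1/q" using q by (simp add: c_def power_divide)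
  define f' where "f' i = c * f i" for i
  have inK: "f' \<in> Kset n"
  proof -
    have "f' k \<in> (if k \<le> n then {-1..1} else {0})" for k
    proof (cases "k \<le> n")
      case True
      have "f k ^ 2 \<le> q" unfolding q_def using True
        by (intro member_le_sum) auto
      then have "(c * f k)^2 \<le> 1" using q by (simp add: power_mult_distrib c2)
      then have "\<bar>c * f k\<bar> \<le> 1" by (simp add: abs_square_le_1)
      then show ?thesis using True by (simp add: f'_def abs_le_iff)
    next
      case False then show ?thesis using sup[of k] by (simp add: f'_def)
    qed
    moreover have "(\<Sum>i\<in>{0..n}. f' i ^ 2) = 1"
    proof -
      have "(\<Sum>i\<in>{0..n}. f' i ^ 2) = c^2 * q" by (simp add: f'_def power_mult_distrib sum_distrib_left q_def)
      then show ?thesis using q c2 by simp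
    qed
    moreover have "(\<Sum>i\<in>{0..n}. f' i) = 0"
      by (simp add: f'_def sum_distrib_left[symmetric] s0)
    ultimately show ?thesis by (simp add: Kset_def)
  qed
  have "Rq n f' = Rq n f / q" unfolding f'_def Rq_scale c2 by simp
  then have "Rq n fm \<le> Rq n f / q" using minf[OF inK] by simp
  then show ?thesis using q by (simp add: q_def[symmetric] pos_le_divide_eq)
qed

lemma first_order:
  assumes fm: "fm \<in> Kset n" and minf: "\<And>f. f \<in> Kset n \<Longrightarrow> Rq n fm \<le> Rq n f"
    and k: "k \<in> {1..n}"
  shows "gof n fm (k-1) + gof n fm (k+1) - 2 * Rq n fm * gof n fm k
     = 2 * (1 + Rq n fm) * (\<Sum>i\<in>{1..n}. gof n fm i)"
proof -
  define \<mu> where "\<mu> = Rq n fm"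
  have fm1: "(\<Sum>i\<in>{0..n}. fm i ^ 2) = 1" and fm0: "(\<Sum>i\<in>{0..n}. fm i) = 0"
    using fm by (auto simp: Kset_def)
  have hk_out: "hk k i = 0" if "i > n" for i using that k by (auto simp: hk_def)
  have ineq: "0 \<le> t * (Bl n fm (hk k) - 2 * \<mu> * (fm k - fm 0)) + t^2 * (Rq n (hk k) - \<mu> * (\<Sum>i\<in>{0..n}. hk k i ^ 2))" for t
  proof -
    define ft where "ft i = fm i + t * hk k i" for i
    have "\<mu> * (\<Sum>i\<in>{0..n}. ft i ^ 2) \<le> Rq n ft"
      unfolding \<mu>_def
    proof (rule homog[OF minf])
      show "ft i = 0" if "i > n" for i using that hk_out Kset_out[OF fm] by (simp add: ft_def)
      have "(\<Sum>i\<in>{0..n}. hk k i * 1) = 1 - 1" by (rule sum_hk[OF k])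
      then show "(\<Sum>i\<in>{0..n}. ft i) = 0"
        by (simp add: ft_def sum.distrib fm0 sum_distrib_left[symmetric])
    qed auto
    moreover have "Rq n ft = \<mu> + t * Bl n fm (hk k) + t^2 * Rq n (hk k)"
      unfolding ft_def Rq_add \<mu>_def by simp
    moreover have "(\<Sum>i\<in>{0..n}. ft i ^ 2) = 1 + 2 * t * (fm k - fm 0) + t^2 * (\<Sum>i\<in>{0..n}. hk k i ^ 2)"
      unfolding ft_def sq_add fm1 using sum_hk[OF k, of fm] by (simp add: mult.commute)
    ultimately show ?thesis by (simp add: algebra_simps)
  qed
  have "Bl n fm (hk k) - 2 * \<mu> * (fm k - fm 0) = 0" by (rule quad_zero[OF ineq])
  then have E: "gof n fm (k-1) + gof n fm (k+1) + 2 * fm 0 = 2 * \<mu> * (fm k - fm 0)"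
    using Bl_hk[OF k, of fm] by simp
  have "(\<Sum>i\<in>{1..n}. gof n fm i) = (\<Sum>i\<in>{1..n}. fm i)" by (intro sum.cong) (auto simp: gof_def)
  also have "\<dots> = - fm 0" using fm0 by (simp add: sum_0n)
  finally have S: "(\<Sum>i\<in>{1..n}. gof n fm i) = - fm 0" .
  have G: "gof n fm k = fm k" using k by (simp add: gof_def)
  show ?thesis unfolding S G \<mu>_def[symmetric] using E by (simp add: algebra_simps)
qed



fun chebP :: "nat \<Rightarrow> real poly" where
  "chebP 0 = 1"
| "chebP (Suc 0) = [:0, 2:]"
| "chebP (Suc (Suc n)) = [:0, 2:] * chebP (Suc n) - chebP n"

lemma poly_chebP: "poly (chebP k) x = chebU k x"
  by (induction k rule: chebP.induct) auto

lemma chebU_m1: "chebU k (-1) = (-1)^k * (real k + 1)"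
  by (induction k rule: chebP.induct) (auto simp: algebra_simps)

definition phiP :: "nat \<Rightarrow> real poly" where
  "phiP n = [:- real n, -3, real n + 1:] * chebP n + [:1, 1:] * (chebP (n-1) + 1)"

lemma poly_phiP: "poly (phiP n) x = phi n x"
  by (simp add: phiP_def phi_def poly_chebP algebra_simps power2_eq_square)

lemma phi_m1: "phi n (-1) \<noteq> 0"
proof -
  have "phi n (-1) = 4 * ((-1)^n * (real n + 1))"
    by (simp add: phi_def chebU_m1 algebra_simps)
  then show ?thesis by simp
qed

lemma finite_roots: "finite {x. phi n x = 0}"
proof -
  have "phiP n \<noteq> 0" using phi_m1[of n] poly_phiP[of n "-1"] by auto
  then have "finite {x. poly (phiP n) x = 0}" by (rule poly_roots_finite)
  then show ?thesis by (simp add: poly_phiP)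
qed

lemma Rq_cont: "continuous_on S (Rq n)"
proof -
  have "continuous_on UNIV (Rq n)"
    unfolding Rq_def[abs_def] by (intro continuous_intros coord_cont)
  then show ?thesis by (rule continuous_on_subset) simp
qed

lemma key_lower:
  assumes n: "n \<ge> 1"
  obtains \<mu> where "phi n \<mu> = 0" "\<mu> \<le> -1/2"
    "\<And>f. (\<Sum>i\<in>{0..n}. f i ^ 2) = 1 \<Longrightarrow> (\<Sum>i\<in>{0..n}. f i) = 0 \<Longrightarrow> \<mu> \<le> Rq n f"
proof -
  obtain fm where fm: "fm \<in> Kset n" and minf: "\<And>f. f \<in> Kset n \<Longrightarrow> Rq n fm \<le> Rq n f"
    using continuous_attains_inf[OF compact_K, of n "Rq n"] tv_K[OF n] Rq_cont by blast
  have le: "Rq n fm \<le> -1/2" using minf[OF tv_K[OF n]] Rq_tv by simp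
  have fm1: "(\<Sum>i\<in>{0..n}. fm i ^ 2) = 1" and fm0: "(\<Sum>i\<in>{0..n}. fm i) = 0"
    using fm by (auto simp: Kset_def)
  have root: "phi n (Rq n fm) = 0"
  proof (rule eig_root[of n "Rq n fm" "gof n fm"])
    show "n \<ge> 1" by fact
    show "Rq n fm \<noteq> 1" using le by simp
    show "gof n fm 0 = 0" by (simp add: gof_def)
    show "gof n fm (n+1) = 0" by (simp add: gof_def)
    show "gof n fm (k-1) + gof n fm (k+1) - 2 * Rq n fm * gof n fm k
       = 2 * (1 + Rq n fm) * (\<Sum>i\<in>{1..n}. gof n fm i)" if "k \<in> {1..n}" for k
      by (rule first_order[OF fm minf that])
    show "\<exists>k\<in>{1..n}. gof n fm k \<noteq> 0"
    proof (rule ccontr)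
      assume "\<not> ?thesis"
      then have z: "fm k = 0" if "k \<in> {1..n}" for k using that by (auto simp: gof_def)
      then have "(\<Sum>i\<in>{1..n}. fm i) = 0" by simp
      then have f00: "fm 0 = 0" using fm0 by (simp add: sum_0n)
      have "(\<Sum>i\<in>{1..n}. fm i ^ 2) = 0" using z by simp
      then show False using fm1 f00 by (simp add: sum_0n)
    qed
  qed
  show ?thesis
  proof (rule that[OF root le])
    fix f :: "nat \<Rightarrow> real"
    assume f1: "(\<Sum>i\<in>{0..n}. f i ^ 2) = 1" and f0: "(\<Sum>i\<in>{0..n}. f i) = 0"
    define ft where "ft i = (if i \<le> n then f i else 0)" for i
    have "ft \<in> Kset n"
    proof -
      have "ft k \<in> (if k \<le> n then {-1..1} else {0})" for k
      proof (cases "k \<le> n")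
        case True
        have "f k ^ 2 \<le> 1" unfolding f1[symmetric] using True by (intro member_le_sum) auto
        then have "\<bar>f k\<bar> \<le> 1" by (simp add: abs_square_le_1)
        then show ?thesis using True by (simp add: ft_def abs_le_iff)
      qed (simp add: ft_def)
      moreover have "(\<Sum>i\<in>{0..n}. ft i ^ 2) = 1" using f1 by (simp add: ft_def)
      moreover have "(\<Sum>i\<in>{0..n}. ft i) = 0" using f0 by (simp add: ft_def)
      ultimately show ?thesis by (simp add: Kset_def)
    qed
    moreover have "Rq n ft = Rq n f" unfolding Rq_def by (simp add: ft_def)
    ultimately show "Rq n fm \<le> Rq n f" using minf by metis
  qed
qed

lemma key_attain:
  assumes n: "n \<ge> 1" and x1: "x \<noteq> 1" and ph: "phi n x = 0"
  obtains f where "(\<Sum>i\<in>{0..n}. f i ^ 2) = 1" "(\<Sum>i\<in>{0..n}. f i) = 0" "Rq n f = x"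
proof -
  obtain g :: "nat \<Rightarrow> real" where g0: "g 0 = 0" and gn1: "g (n+1) = 0"
    and eq: "\<And>k. k \<in> {1..n} \<Longrightarrow> g (k-1) + g (k+1) - 2*x*g k = 2*(1+x)*(\<Sum>i\<in>{1..n}. g i)"
    and nz: "\<exists>k\<in>{1..n}. g k \<noteq> 0"
    using root_eig[OF n x1 ph] by blast
  define ss where "ss = (\<Sum>i\<in>{1..n}. g i)"
  define G where "G = (\<Sum>i\<in>{1..n}. g i ^ 2)"
  define f where "f i = (if i = 0 then - ss else if i \<le> n then g i else 0)" for i
  have sf: "(\<Sum>i\<in>{0..n}. f i) = 0"
    by (simp add: sum_0n f_def ss_def)
  have sf2: "(\<Sum>i\<in>{0..n}. f i ^ 2) = ss^2 + G"
    by (simp add: sum_0n f_def G_def)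
  have "G > 0"
  proof -
    obtain k where k: "k \<in> {1..n}" "g k \<noteq> 0" using nz by blast
    have "g k ^ 2 \<le> G" unfolding G_def using k by (intro member_le_sum) auto
    moreover have "g k ^ 2 > 0" using k by simp
    ultimately show ?thesis by linarith
  qed
  define q where "q = ss^2 + G"
  have q: "q > 0" using \<open>G > 0\<close> by (simp add: q_def add_nonneg_pos)
  have Rf: "Rq n f = x * q"
  proof -
    have "(\<Sum>k\<in>{1..<n}. f k * f (Suc k)) = (\<Sum>k\<in>{1..<n}. g k * g (Suc k))"
      by (intro sum.cong) (auto simp: f_def)
    then have "Rq n f = (\<Sum>k\<in>{1..<n}. g k * g (Suc k)) - ss^2"
      by (simp add: Rq_def f_def)
    also have "\<dots> = x * q" using rayleigh[of g n x, OF g0 gn1 eq] by (simp add: q_def ss_def G_def)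
    finally show ?thesis .
  qed
  define c where "c = 1 / sqrt q"
  have c2: "c^2 = 1/q" using q by (simp add: c_def power_divide)
  show ?thesis
  proof (rule that[of "\<lambda>i. c * f i"])
    have "(\<Sum>i\<in>{0..n}. (c * f i) ^ 2) = c^2 * q"
      by (simp add: power_mult_distrib sum_distrib_left[symmetric] sf2 q_def)
    then show "(\<Sum>i\<in>{0..n}. (c * f i) ^ 2) = 1" using q c2 by simp
    show "(\<Sum>i\<in>{0..n}. c * f i) = 0" by (simp add: sum_distrib_left[symmetric] sf)
    show "Rq n (\<lambda>i. c * f i) = x" using q by (simp add: Rq_scale c2 Rf)
  qed
qed



lemma fan_irrefl: "\<not> fan_edge n i i"
  by (auto simp: fan_edge_def)

lemma dist_fan:
  assumes "i \<le> n" "j \<le> n"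
  shows "graph_dist (fan_edge n) i j = (if i = j then 0 else if fan_edge n i j then 1 else 2)"
proof -
  consider "i = j" | "i \<noteq> j" "fan_edge n i j" | "i \<noteq> j" "\<not> fan_edge n i j" by blast
  then show ?thesis
  proof cases
    case 1 then show ?thesis by (simp add: graph_dist_def)
  next
    case 2
    have "(LEAST k. (fan_edge n ^^ k) i j) = 1"
    proof (rule Least_equality)
      show "(fan_edge n ^^ 1) i j" using 2 by (simp add: relcompp_apply)
      show "1 \<le> k" if "(fan_edge n ^^ k) i j" for k
        using that 2 by (cases k) auto
    qed
    then show ?thesis using 2 by (simp add: graph_dist_def)
  next
    case 3
    then have ij: "1 \<le> i" "1 \<le> j" using assms by (auto simp: fan_edge_def)
    have "(LEAST k. (fan_edge n ^^ k) i j) = 2"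
    proof (rule Least_equality)
      show "(fan_edge n ^^ 2) i j" using ij assms
        by (auto simp: numeral_2_eq_2 relcompp_apply fan_edge_def intro!: exI[of _ 0])
      show "2 \<le> k" if "(fan_edge n ^^ k) i j" for k
      proof (rule ccontr)
        assume "\<not> 2 \<le> k"
        then have "k = 0 \<or> k = 1" by auto
        then show False using that 3 by auto
      qed
    qed
    then show ?thesis using 3 by (simp add: graph_dist_def)
  qed
qed

lemma inner0: "(\<Sum>j\<in>{0..n}. (if fan_edge n 0 j then f j else 0)) = (\<Sum>j\<in>{1..n}. (f j::real))"
  by (simp add: sum_0n fan_edge_def)

lemma inner1:
  assumes i: "i \<in> {1..n}"
  shows "(\<Sum>j\<in>{0..n}. (if fan_edge n i j then f j else 0)) = f 0 + gof n f (i+1) + gof n f (i-1)"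
proof -
  have "(\<Sum>j\<in>{1..n}. (if fan_edge n i j then f j else (0::real))) =
        (\<Sum>j\<in>{1..n}. (if j = i+1 then f j else 0) + (if j = i-1 then f j else 0))"
    using i by (intro sum.cong) (auto simp: fan_edge_def)
  also have "\<dots> = gof n f (i+1) + gof n f (i-1)"
    using i by (simp add: sum.distrib sum.delta' gof_def)
  finally show ?thesis using i by (simp add: sum_0n fan_edge_def)
qed

lemma edge_sum:
  fixes f :: "nat \<Rightarrow> real"
  assumes n: "n \<ge> 1" and s0: "(\<Sum>i\<in>{0..n}. f i) = 0"
  shows "(\<Sum>i\<in>{0..n}. f i * (\<Sum>j\<in>{0..n}. (if fan_edge n i j then f j else 0)))
     = - 2 * f 0 ^ 2 + 2 * (\<Sum>k\<in>{1..<n}. f k * f (Suc k))"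
proof -
  define g where "g = gof n f"
  have g0: "g 0 = 0" by (simp add: g_def gof_def)
  have gn1: "g (n+1) = 0" by (simp add: g_def gof_def)
  have S1: "(\<Sum>j\<in>{1..n}. f j) = - f 0" using s0 by (simp add: sum_0n)
  have "(\<Sum>i\<in>{1..n}. f i * (\<Sum>j\<in>{0..n}. (if fan_edge n i j then f j else 0)))
      = (\<Sum>i\<in>{1..n}. f 0 * f i + g i * g (i+1) + g i * g (i-1))"
    by (intro sum.cong) (auto simp: inner1 g_def algebra_simps gof_def)
  also have "\<dots> = f 0 * (\<Sum>i\<in>{1..n}. f i) + (\<Sum>i\<in>{1..n}. g i * g (i+1)) + (\<Sum>i\<in>{1..n}. g i * g (i-1))"
    by (simp add: sum.distrib sum_distrib_left)
  also have "\<dots> = - (f 0 ^ 2) + 2 * (\<Sum>k\<in>{1..<n}. g k * g (Suc k))"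
    using prod_prev[of g n, OF g0] prod_next[of g n, OF g0] gn1 S1 by (simp add: power2_eq_square)
  also have "(\<Sum>k\<in>{1..<n}. g k * g (Suc k)) = (\<Sum>k\<in>{1..<n}. f k * f (Suc k))"
    by (intro sum.cong) (auto simp: g_def gof_def)
  finally have A: "(\<Sum>i\<in>{1..n}. f i * (\<Sum>j\<in>{0..n}. (if fan_edge n i j then f j else 0)))
      = - (f 0 ^ 2) + 2 * (\<Sum>k\<in>{1..<n}. f k * f (Suc k))" .
  show ?thesis
    unfolding sum_0n[of "\<lambda>i. f i * (\<Sum>j\<in>{0..n}. (if fan_edge n i j then f j else 0))"] A inner0 S1
    by (simp add: power2_eq_square)
qed

lemma F_sum:
  fixes f :: "nat \<Rightarrow> real"
  assumes n: "n \<ge> 1" and s0: "(\<Sum>i\<in>{0..n}. f i) = 0"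
  shows "(\<Sum>i\<in>{0..n}. \<Sum>j\<in>{0..n}. f i * real (graph_dist (fan_edge n) i j) * f j)
     = - 2 * (\<Sum>i\<in>{0..n}. f i ^ 2) - 2 * Rq n f"
proof -
  have "(\<Sum>i\<in>{0..n}. \<Sum>j\<in>{0..n}. f i * real (graph_dist (fan_edge n) i j) * f j)
      = (\<Sum>i\<in>{0..n}. \<Sum>j\<in>{0..n}. 2 * (f i * f j) - 2 * (if i = j then f i * f j else 0)
            - f i * (if fan_edge n i j then f j else 0))"
    by (intro sum.cong refl) (auto simp: dist_fan fan_irrefl)
  also have "\<dots> = 2 * (\<Sum>i\<in>{0..n}. f i) * (\<Sum>j\<in>{0..n}. f j) - 2 * (\<Sum>i\<in>{0..n}. f i ^ 2)
      - (\<Sum>i\<in>{0..n}. f i * (\<Sum>j\<in>{0..n}. (if fan_edge n i j then f j else 0)))"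
  proof -
    have a: "(\<Sum>i\<in>{0..n}. \<Sum>j\<in>{0..n}. 2 * (f i * f j)) = 2 * (\<Sum>i\<in>{0..n}. f i) * (\<Sum>j\<in>{0..n}. f j)"
    proof -
      have "(\<Sum>j\<in>{0..n}. 2 * (f i * f j)) = 2 * f i * (\<Sum>j\<in>{0..n}. f j)" for i
        by (simp add: sum_distrib_left mult.assoc)
      then show ?thesis using s0 by simp
    qed
    have b: "(\<Sum>i\<in>{0..n}. \<Sum>j\<in>{0..n}. 2 * (if i = j then f i * f j else 0)) = 2 * (\<Sum>i\<in>{0..n}. f i ^ 2)"
    proof -
      have "(\<Sum>i\<in>{0..n}. \<Sum>j\<in>{0..n}. 2 * (if i = j then f i * f j else 0)) = (\<Sum>i\<in>{0..n}. 2 * f i ^ 2)"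
      proof (intro sum.cong refl)
        fix i assume "i \<in> {0..n}"
        have "(\<Sum>j\<in>{0..n}. 2 * (if i = j then f i * f j else 0)) = 2 * (\<Sum>j\<in>{0..n}. (if i = j then f i * f j else 0))"
          by (rule sum_distrib_left[symmetric])
        then show "(\<Sum>j\<in>{0..n}. 2 * (if i = j then f i * f j else 0)) = 2 * f i ^ 2"
          using \<open>i \<in> {0..n}\<close> by (simp add: power2_eq_square)
      qed
      then show ?thesis by (simp add: sum_distrib_left)
    qed
    have c: "(\<Sum>i\<in>{0..n}. \<Sum>j\<in>{0..n}. f i * (if fan_edge n i j then f j else 0)) =
        (\<Sum>i\<in>{0..n}. f i * (\<Sum>j\<in>{0..n}. (if fan_edge n i j then f j else 0)))"
      by (simp add: sum_distrib_left)
    show ?thesis unfolding sum_subtractf a b c by simp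
  qed
  also have "\<dots> = - 2 * (\<Sum>i\<in>{0..n}. f i ^ 2) - 2 * Rq n f"
    unfolding edge_sum[OF n s0] s0 by (simp add: Rq_def)
  finally show ?thesis .
qed



theorem mainTheorem9:
  fixes n :: nat
  assumes "n \<ge> 1"
  shows "QEC (fan_vertices n) (fan_edge n) = - 2 * Min {x :: real. phi n x = 0} - 2"
proof -
  have n: "n \<ge> 1" by fact
  obtain \<mu> where mu: "phi n \<mu> = 0" "\<mu> \<le> -1/2"
    and low: "\<And>f. (\<Sum>i\<in>{0..n}. f i ^ 2) = 1 \<Longrightarrow> (\<Sum>i\<in>{0..n}. f i) = 0 \<Longrightarrow> \<mu> \<le> Rq n f"
    using key_lower[OF n] by blast
  define \<alpha> where "\<alpha> = Min {x :: real. phi n x = 0}"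
  have fin: "finite {x :: real. phi n x = 0}" by (rule finite_roots)
  have "\<alpha> \<le> \<mu>" unfolding \<alpha>_def using fin mu(1) by (intro Min_le) auto
  have "\<alpha> \<in> {x :: real. phi n x = 0}" unfolding \<alpha>_def using fin mu(1) by (intro Min_in) auto
  then have pa: "phi n \<alpha> = 0" by simp
  have a1: "\<alpha> \<noteq> 1" using \<open>\<alpha> \<le> \<mu>\<close> mu(2) by simp
  obtain fa where fa: "(\<Sum>i\<in>{0..n}. fa i ^ 2) = 1" "(\<Sum>i\<in>{0..n}. fa i) = 0" "Rq n fa = \<alpha>"
    by (rule key_attain[OF n a1 pa])
  let ?X = "{(\<Sum>i\<in>fan_vertices n. \<Sum>j\<in>fan_vertices n. f i * real (graph_dist (fan_edge n) i j) * f j) | f :: nat \<Rightarrow> real.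
                   (\<Sum>i\<in>fan_vertices n. f i ^ 2) = 1 \<and> (\<Sum>i\<in>fan_vertices n. f i) = 0}"
  have "Sup ?X = - 2 * \<alpha> - 2"
  proof (rule cSup_eq_maximum)
    have "(\<Sum>i\<in>fan_vertices n. \<Sum>j\<in>fan_vertices n. fa i * real (graph_dist (fan_edge n) i j) * fa j) = - 2 * \<alpha> - 2"
      unfolding fan_vertices_def F_sum[OF n fa(2)] fa(1) fa(3) by simp
    then show "- 2 * \<alpha> - 2 \<in> ?X" using fa(1,2) unfolding fan_vertices_def by force
  next
    fix y assume "y \<in> ?X"
    then obtain f :: "nat \<Rightarrow> real" where f: "(\<Sum>i\<in>{0..n}. f i ^ 2) = 1" "(\<Sum>i\<in>{0..n}. f i) = 0"
      and y: "y = (\<Sum>i\<in>{0..n}. \<Sum>j\<in>{0..n}. f i * real (graph_dist (fan_edge n) i j) * f j)"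
      unfolding fan_vertices_def by blast
    have "y = - 2 - 2 * Rq n f" unfolding y F_sum[OF n f(2)] f(1) by simp
    moreover have "\<alpha> \<le> Rq n f" using low[OF f] \<open>\<alpha> \<le> \<mu>\<close> by simp
    ultimately show "y \<le> - 2 * \<alpha> - 2" by simp
  qed
  then show ?thesis unfolding QEC_def \<alpha>_def by simp
qed

end
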